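(* Let $(\beta,\lambda)\in\mathcal T$, $J\ge2$, and $0\le\eta<1-1/J$. Let $\bm\theta^*_{\beta,\lambda}$ be a global minimizer over $\Theta$ of the clean expected SD-loss $R_{\beta,\lambda}$ and $\bm\theta^\eta_{\beta,\lambda}$ a global minimizer over $\Theta$ of the noisy expected SD-loss $R^\eta_{\beta,\lambda}$ (both assumed to exist). Then $$0\le R_{\beta,\lambda}(\bm\theta^\eta_{\beta,\lambda})-R_{\beta,\lambda}(\bm\theta^*_{\beta,\lambda})\le M^{(\eta)}_{\beta,\lambda}:=\frac{\eta}{J-1-J\eta}\cdot\frac1A\Big(J-J^{1-\beta}+\frac{1+\beta}{B}\big|1-J^{1-B}\big|\Big).$$
   Context: $\ell_{\beta,\lambda}(\bm u,\bm p)=\frac1A\sum_{j=1}^J[p_j^{1+\beta}-\frac{1+\beta}{B}u_jp_j^B+\frac AB]$ with $A=1+\lambda(1-\beta)$, $B=\beta-\lambda(1-\beta)$, and $\mathcal T=\{(\beta,\lambda):0\le\beta<1,-\frac1{1-\beta}<\lambda<\frac\beta{1-\beta}\}\cup\{(1,\lambda):\lambda\in\mathbb R\}$ (so $A,B>0$). Features $\bm X\sim G_{\bm X}$; the clean one-hot label $\bm Y\in\{\bm e_1,\dots,\bm e_J\}$ given $\bm X=\bm x$ is Multinomial$(1;\bm p^*(\bm x))$. Under uniform label noise of level $\eta$, the observed label $\widetilde{\bm Y}$ given $\bm X=\bm x$ equals $\bm e_j$ with probability $(1-\eta)p_j^*(\bm x)+\frac{\eta}{J-1}(1-p_j^*(\bm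 x))$ (i.e. the true label is kept with probability $1-\eta$ and otherwise replaced uniformly by one of the other $J-1$ labels). $R_{\beta,\lambda}(\bm\theta)=E[\ell_{\beta,\lambda}(\bm Y,\bm p(\bm X;\bm\theta))]$ and $R^\eta_{\beta,\lambda}(\bm\theta)=E[\ell_{\beta,\lambda}(\widetilde{\bm Y},\bm p(\bm X;\bm\theta))]$, where $\bm p(\bm x;\bm\theta)\in\Delta_J$ are softmax network class probabilities, $\bm\theta\in\Theta$. *)

theory Defs
  imports "HOL-Probability.Probability"
begin

text \<open>Classes are indexed by 0..<J. Vectors in R^J are functions nat => real.\<close>

definition sdA :: "real \<Rightarrow> real \<Rightarrow> real" where
  "sdA \<beta> lam = 1 + lam * (1 - \<beta>)"

definition sdB :: "real \<Rightarrow> real \<Rightarrow> real" where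
  "sdB \<beta> lam = \<beta> - lam * (1 - \<beta>)"

definition in_T :: "real \<Rightarrow> real \<Rightarrow> bool" where
  "in_T \<beta> lam \<longleftrightarrow>
     (0 \<le> \<beta> \<and> \<beta> < 1 \<and> - 1 / (1 - \<beta>)  < lam \<and> lam < \<beta> / (1 - \<beta>)) \<or> \<beta> = 1"

definition sd_loss :: "real \<Rightarrow> real \<Rightarrow> nat \<Rightarrow> (nat \<Rightarrow> real) \<Rightarrow> (nat \<Rightarrow> real) \<Rightarrow> real" where
  "sd_loss \<beta> lam J u p = (1 / sdA \<beta> lam) *
     (\<Sum>j<J. p j powr (1 + \<beta>) - (1 + \<beta>) / sdB \<beta> lam * u j * p j powr (sdB \<beta> lam)
            + sdA \<beta> lam / sdB \<beta> lam)"

definition onehot :: "nat \<Rightarrow> nat \<Rightarrow> real" where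
  "onehot j = (\<lambda>k. if k = j then 1 else 0)"

definition softmax :: "nat \<Rightarrow> (nat \<Rightarrow> real) \<Rightarrow> nat \<Rightarrow> real" where
  "softmax J z = (\<lambda>j. exp (z j) / (\<Sum>k<J. exp (z k)))"

definition in_simplex :: "nat \<Rightarrow> (nat \<Rightarrow> real) \<Rightarrow> bool" where
  "in_simplex J q \<longleftrightarrow> (\<forall>j<J. 0 \<le> q j) \<and> (\<Sum>j<J. q j) = 1"

text \<open>Conditional label distribution under uniform label noise of level eta.\<close>
definition noisy_prob :: "nat \<Rightarrow> real \<Rightarrow> (nat \<Rightarrow> real) \<Rightarrow> nat \<Rightarrow> real" where
  "noisy_prob J \<eta> q = (\<lambda>j. (1 - \<eta>) * q j + \<eta> / (real J - 1) * (1 - q j))"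

text \<open>Expected loss E[ell(Y, p(X))] where X ~ G and Y | X = x ~ Multinomial(1; q(x)).\<close>
definition exp_loss :: "real \<Rightarrow> real \<Rightarrow> nat \<Rightarrow> 'x measure \<Rightarrow> ('x \<Rightarrow> nat \<Rightarrow> real)
     \<Rightarrow> ('x \<Rightarrow> nat \<Rightarrow> real) \<Rightarrow> real" where
  "exp_loss \<beta> lam J G q p = (\<integral>x. (\<Sum>j<J. q x j * sd_loss \<beta> lam J (onehot j) (p x)) \<partial>G)"

definition risk :: "real \<Rightarrow> real \<Rightarrow> nat \<Rightarrow> 'x measure \<Rightarrow> ('x \<Rightarrow> nat \<Rightarrow> real)
     \<Rightarrow> ('t \<Rightarrow> 'x \<Rightarrow> nat \<Rightarrow> real) \<Rightarrow> 't \<Rightarrow> real" where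
  "risk \<beta> lam J G pstar f \<theta> = exp_loss \<beta> lam J G pstar (\<lambda>x. softmax J (f \<theta> x))"

definition noisy_risk :: "real \<Rightarrow> real \<Rightarrow> nat \<Rightarrow> real \<Rightarrow> 'x measure \<Rightarrow> ('x \<Rightarrow> nat \<Rightarrow> real)
     \<Rightarrow> ('t \<Rightarrow> 'x \<Rightarrow> nat \<Rightarrow> real) \<Rightarrow> 't \<Rightarrow> real" where
  "noisy_risk \<beta> lam J \<eta> G pstar f \<theta> =
     exp_loss \<beta> lam J G (\<lambda>x. noisy_prob J \<eta> (pstar x)) (\<lambda>x. softmax J (f \<theta> x))"

definition excess_bound :: "real \<Rightarrow> real \<Rightarrow> nat \<Rightarrow> real \<Rightarrow> real" where
  "excess_bound \<beta> lam J \<eta> =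
     \<eta> / (real J - 1 - real J * \<eta>) * (1 / sdA \<beta> lam) *
     (real J - real J powr (1 - \<beta>)
      + (1 + \<beta>) / sdB \<beta> lam * \<bar>1 - real J powr (1 - sdB \<beta> lam)\<bar>)"

end

theory Submission
  imports Defs
begin

lemma powr_concave_neg:
  assumes "0 < r" "r \<le> 1" shows "convex_on {0<..} (\<lambda>x::real. - (x powr r))"
proof (rule f''_ge0_imp_convex[where f' = "\<lambda>x. - (r * x powr (r - 1))"
     and f'' = "\<lambda>x. - (r * ((r - 1) * x powr (r - 1 - 1)))"])
  show "convex ({0<..} :: real set)" by simp
  fix x :: real assume x: "x \<in> {0<..}"
  then have x0: "x > 0" by simp
  show "((\<lambda>x. - (x powr r)) has_real_derivative - (r * x powr (r - 1))) (at x)"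
    using x0 by (auto intro!: derivative_eq_intros)
  show "((\<lambda>x. - (r * x powr (r - 1))) has_real_derivative - (r * ((r - 1) * x powr (r - 1 - 1)))) (at x)"
    using x0 by (auto intro!: derivative_eq_intros)
  have "r * ((r - 1) * x powr (r - 1 - 1)) \<le> 0"
  proof (rule mult_nonneg_nonpos)
    show "0 \<le> r" using assms by simp
    show "(r - 1) * x powr (r - 1 - 1) \<le> 0"
      using assms by (intro mult_nonpos_nonneg) auto
  qed
  then show "0 \<le> - (r * ((r - 1) * x powr (r - 1 - 1)))" by simp
qed

lemma powsum_ge1:
  fixes p :: "nat \<Rightarrow> real"
  assumes J: "J \<ge> 1" and pos: "\<forall>j<J. 0 < p j" and s: "(\<Sum>j<J. p j) = 1" and r: "r \<ge> 1"
  shows "real J powr (1 - r) \<le> (\<Sum>j<J. p j powr r) \<and> (\<Sum>j<J. p j powr r) \<le> 1"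
proof
  have "(\<lambda>x. x powr r) (\<Sum>j<J. (1/real J) *\<^sub>R p j) \<le> (\<Sum>j<J. (1/real J) * (p j powr r))"
    by (rule convex_on_sum[OF _ _ powr_convex[OF r]]) (use J pos in \<open>auto simp: lessThan_empty_iff\<close>)
  moreover have "(\<Sum>j<J. (1/real J) *\<^sub>R p j) = 1/real J"
    unfolding real_scaleR_def sum_distrib_left[symmetric] s by simp
  moreover have "(\<Sum>j<J. (1/real J) * (p j powr r)) = (1/real J) * (\<Sum>j<J. p j powr r)"
    by (rule sum_distrib_left[symmetric])
  ultimately have "(1/real J) powr r \<le> (1/real J) * (\<Sum>j<J. p j powr r)"
    by simp
  then have "real J * (1/real J) powr r \<le> real J * ((1/real J) * (\<Sum>j<J. p j powr r))"
    by (rule mult_left_mono) simp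
  then have "real J * (1/real J) powr r \<le> (\<Sum>j<J. p j powr r)"
    using J by simp
  moreover have "real J * (1/real J) powr r = real J powr (1 - r)"
  proof -
    have "(1/real J) powr r = 1 / real J powr r" using J by (simp add: powr_divide)
    moreover have "real J powr (1 - r) = real J / real J powr r" using J by (simp add: powr_diff)
    ultimately show ?thesis by simp
  qed
  ultimately show "real J powr (1 - r) \<le> (\<Sum>j<J. p j powr r)" by simp
  have "p j \<le> 1" if "j < J" for j
  proof -
    have "p j \<le> (\<Sum>j<J. p j)"
      by (rule member_le_sum) (use pos that in \<open>auto simp: less_imp_le\<close>)
    then show ?thesis using s by simp
  qed
  then have "(\<Sum>j<J. p j powr r) \<le> (\<Sum>j<J. p j)"
  proof (intro sum_mono)
    fix j assume j: "j \<in> {..<J}" and le1: "\<And>j. j < J \<Longrightarrow> p j \<le> 1"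
    have "p j powr r \<le> p j powr 1" using powr_mono'[of 1 r "p j"] pos j le1[of j] r by auto
    then show "p j powr r \<le> p j" using pos j abs_of_pos[of "p j"] by simp
  qed
  then show "(\<Sum>j<J. p j powr r) \<le> 1" using s by simp
qed

lemma powsum_le1:
  fixes p :: "nat \<Rightarrow> real"
  assumes J: "J \<ge> 1" and pos: "\<forall>j<J. 0 < p j" and s: "(\<Sum>j<J. p j) = 1" and r: "0 < r" "r \<le> 1"
  shows "1 \<le> (\<Sum>j<J. p j powr r) \<and> (\<Sum>j<J. p j powr r) \<le> real J powr (1 - r)"
proof
  have "(\<lambda>x. - (x powr r)) (\<Sum>j<J. (1/real J) *\<^sub>R p j) \<le> (\<Sum>j<J. (1/real J) * (- (p j powr r)))"
    by (rule convex_on_sum[OF _ _ powr_concave_neg[OF r]]) (use J pos in \<open>auto simp: lessThan_empty_iff\<close>)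
  moreover have "(\<Sum>j<J. (1/real J) *\<^sub>R p j) = 1/real J"
    unfolding real_scaleR_def sum_distrib_left[symmetric] s by simp
  moreover have "(\<Sum>j<J. (1/real J) * (- (p j powr r))) = - ((1/real J) * (\<Sum>j<J. p j powr r))"
    by (simp add: sum_distrib_left sum_negf)
  ultimately have "(1/real J) * (\<Sum>j<J. p j powr r) \<le> (1/real J) powr r"
    by simp
  then have "real J * ((1/real J) * (\<Sum>j<J. p j powr r)) \<le> real J * (1/real J) powr r"
    by (rule mult_left_mono) simp
  then have "(\<Sum>j<J. p j powr r) \<le> real J * (1/real J) powr r"
    using J by simp
  moreover have "real J * (1/real J) powr r = real J powr (1 - r)"
  proof -
    have "(1/real J) powr r = 1 / real J powr r" using J by (simp add: powr_divide)
    moreover have "real J powr (1 - r) = real J / real J powr r" using J by (simp add: powr_diff)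
    ultimately show ?thesis by simp
  qed
  ultimately show "(\<Sum>j<J. p j powr r) \<le> real J powr (1 - r)" by simp
  have "p j \<le> 1" if "j < J" for j
  proof -
    have "p j \<le> (\<Sum>j<J. p j)"
      by (rule member_le_sum) (use pos that in \<open>auto simp: less_imp_le\<close>)
    then show ?thesis using s by simp
  qed
  then have "(\<Sum>j<J. p j) \<le> (\<Sum>j<J. p j powr r)"
  proof (intro sum_mono)
    fix j assume j: "j \<in> {..<J}" and le1: "\<And>j. j < J \<Longrightarrow> p j \<le> 1"
    have "p j powr 1 \<le> p j powr r" using powr_mono'[of r 1 "p j"] pos j le1[of j] r by auto
    then show "p j \<le> p j powr r" using pos j abs_of_pos[of "p j"] by simp
  qed
  then show "1 \<le> (\<Sum>j<J. p j powr r)" using s by simp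
qed





lemma sd_onehot:
  assumes "j < J"
  shows "sd_loss b lam J (onehot j) p = (1 / sdA b lam) *
     ((\<Sum>k<J. p k powr (1 + b)) - (1 + b) / sdB b lam * p j powr sdB b lam + real J * (sdA b lam / sdB b lam))"
proof -
  have "(\<Sum>k<J. (1 + b) / sdB b lam * onehot j k * p k powr sdB b lam) = (1 + b) / sdB b lam * p j powr sdB b lam"
  proof -
    have "(\<Sum>k<J. (1 + b) / sdB b lam * onehot j k * p k powr sdB b lam)
        = (\<Sum>k<J. if k = j then (1 + b) / sdB b lam * p k powr sdB b lam else 0)"
      by (rule sum.cong) (auto simp: onehot_def)
    also have "\<dots> = (1 + b) / sdB b lam * p j powr sdB b lam"
      using assms by (simp add: sum.delta)
    finally show ?thesis .
  qed
  then show ?thesis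
    unfolding sd_loss_def by (simp add: sum.distrib sum_subtractf)
qed

lemma sum_onehot:
  "(\<Sum>j<J. sd_loss b lam J (onehot j) p) = (1 / sdA b lam) *
     (real J * (\<Sum>k<J. p k powr (1 + b)) - (1 + b) / sdB b lam * (\<Sum>j<J. p j powr sdB b lam)
      + real J * (real J * (sdA b lam / sdB b lam)))"
proof -
  have "(\<Sum>j<J. sd_loss b lam J (onehot j) p) = (\<Sum>j<J. (1 / sdA b lam) *
     ((\<Sum>k<J. p k powr (1 + b)) - (1 + b) / sdB b lam * p j powr sdB b lam + real J * (sdA b lam / sdB b lam)))"
    by (rule sum.cong) (auto simp: sd_onehot)
  also have "\<dots> = (1 / sdA b lam) * (\<Sum>j<J. 
     ((\<Sum>k<J. p k powr (1 + b)) - (1 + b) / sdB b lam * p j powr sdB b lam + real J * (sdA b lam / sdB b lam)))"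
    by (rule sum_distrib_left[symmetric])
  also have "(\<Sum>j<J. 
     ((\<Sum>k<J. p k powr (1 + b)) - (1 + b) / sdB b lam * p j powr sdB b lam + real J * (sdA b lam / sdB b lam)))
     = real J * (\<Sum>k<J. p k powr (1 + b)) - (1 + b) / sdB b lam * (\<Sum>j<J. p j powr sdB b lam)
      + real J * (real J * (sdA b lam / sdB b lam))"
    by (simp only: sum.distrib sum_subtractf sum_distrib_left[symmetric] sum_constant) simp
  finally show ?thesis .
qed

lemma pointwise_bound:
  fixes p q :: "nat \<Rightarrow> real"
  assumes J: "J \<ge> 1" and b: "0 \<le> b" "b \<le> 1" and A: "sdA b lam > 0" and B: "sdB b lam > 0"
    and pp: "\<forall>j<J. 0 < p j" "(\<Sum>j<J. p j) = 1"
    and qp: "\<forall>j<J. 0 < q j" "(\<Sum>j<J. q j) = 1"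
  shows "(\<Sum>j<J. sd_loss b lam J (onehot j) p) - (\<Sum>j<J. sd_loss b lam J (onehot j) q)
     \<le> (1 / sdA b lam) * (real J - real J powr (1 - b)
      + (1 + b) / sdB b lam * \<bar>1 - real J powr (1 - sdB b lam)\<bar>)"
proof -
  define P where "P = (\<Sum>k<J. p k powr (1 + b))"
  define Q where "Q = (\<Sum>k<J. q k powr (1 + b))"
  define P' where "P' = (\<Sum>k<J. p k powr sdB b lam)"
  define Q' where "Q' = (\<Sum>k<J. q k powr sdB b lam)"
  define c where "c = (1 + b) / sdB b lam"
  have c0: "c \<ge> 0" using b B by (simp add: c_def)
  have hP: "real J powr (1 - (1+b)) \<le> P \<and> P \<le> 1"
    unfolding P_def by (rule powsum_ge1) (use J pp b in auto)
  have hQ: "real J powr (1 - (1+b)) \<le> Q \<and> Q \<le> 1"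
    unfolding Q_def by (rule powsum_ge1) (use J qp b in auto)
  have JJ: "real J * real J powr (1 - (1+b)) = real J powr (1 - b)"
  proof -
    have "real J * real J powr (1 - (1+b)) = real J powr 1 * real J powr (- b)"
      using J by simp
    also have "\<dots> = real J powr (1 - b)" using powr_add[of "real J" 1 "-b"] by simp
    finally show ?thesis .
  qed
  have t1: "real J * (P - Q) \<le> real J - real J powr (1 - b)"
  proof -
    have "real J * (P - Q) \<le> real J * (1 - real J powr (1 - (1+b)))"
      using hP hQ by (intro mult_left_mono) auto
    then show ?thesis using JJ by (simp add: algebra_simps)
  qed
  have hPQ: "\<bar>P' - Q'\<bar> \<le> \<bar>1 - real J powr (1 - sdB b lam)\<bar>"
  proof (cases "sdB b lam \<ge> 1")
    case True
    have "real J powr (1 - sdB b lam) \<le> P' \<and> P' \<le> 1"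
      unfolding P'_def by (rule powsum_ge1) (use J pp True in auto)
    moreover have "real J powr (1 - sdB b lam) \<le> Q' \<and> Q' \<le> 1"
      unfolding Q'_def by (rule powsum_ge1) (use J qp True in auto)
    ultimately show ?thesis by linarith
  next
    case False
    have "1 \<le> P' \<and> P' \<le> real J powr (1 - sdB b lam)"
      unfolding P'_def by (rule powsum_le1) (use J pp False B in auto)
    moreover have "1 \<le> Q' \<and> Q' \<le> real J powr (1 - sdB b lam)"
      unfolding Q'_def by (rule powsum_le1) (use J qp False B in auto)
    ultimately show ?thesis by linarith
  qed
  have t2: "- c * (P' - Q') \<le> c * \<bar>1 - real J powr (1 - sdB b lam)\<bar>"
  proof -
    have "- c * (P' - Q') \<le> c * \<bar>P' - Q'\<bar>" using c0
      using mult_left_mono[OF abs_ge_minus_self[of "P' - Q'"] c0] by (simp add: algebra_simps)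
    also have "\<dots> \<le> c * \<bar>1 - real J powr (1 - sdB b lam)\<bar>" using hPQ c0 by (rule mult_left_mono)
    finally show ?thesis .
  qed
  have "(\<Sum>j<J. sd_loss b lam J (onehot j) p) - (\<Sum>j<J. sd_loss b lam J (onehot j) q)
      = (1 / sdA b lam) * (real J * (P - Q) - c * (P' - Q'))"
    unfolding sum_onehot P_def Q_def P'_def Q'_def c_def by (simp add: algebra_simps)
  also have "\<dots> \<le> (1 / sdA b lam) * (real J - real J powr (1 - b) + c * \<bar>1 - real J powr (1 - sdB b lam)\<bar>)"
    using t1 t2 A by (intro mult_left_mono) auto
  finally show ?thesis unfolding c_def .
qed

lemma softmax_pos: "J \<ge> 1 \<Longrightarrow> 0 < softmax J z j"
  unfolding softmax_def by (intro divide_pos_pos) (auto intro!: sum_pos simp: lessThan_empty_iff)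

lemma softmax_sum: "J \<ge> 1 \<Longrightarrow> (\<Sum>j<J. softmax J z j) = 1"
proof -
  assume "J \<ge> 1"
  then have "(\<Sum>k<J. exp (z k)) > 0" by (intro sum_pos) (auto simp: lessThan_empty_iff)
  then show ?thesis unfolding softmax_def by (simp add: sum_divide_distrib[symmetric])
qed

lemma softmax_le1: "J \<ge> 1 \<Longrightarrow> j < J \<Longrightarrow> softmax J z j \<le> 1"
proof -
  assume J: "J \<ge> 1" and j: "j < J"
  have "softmax J z j \<le> (\<Sum>j<J. softmax J z j)"
    by (rule member_le_sum) (use J j softmax_pos in \<open>auto intro: less_imp_le\<close>)
  then show ?thesis using softmax_sum[OF J] by simp
qed

lemma sd_bound:
  assumes J: "J \<ge> 1" and j: "j < J" and b: "0 \<le> b" and A: "sdA b lam > 0" and B: "sdB b lam > 0"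
  shows "\<bar>sd_loss b lam J (onehot j) (softmax J z)\<bar>
     \<le> (1 / sdA b lam) * (real J + (1 + b) / sdB b lam + real J * (sdA b lam / sdB b lam))"
proof -
  let ?p = "softmax J z"
  have pw: "0 \<le> ?p k powr r \<and> ?p k powr r \<le> 1" if "k < J" "r > 0" for k r
    using softmax_pos[OF J, of z k] softmax_le1[OF J that(1), of z] that(2)
    by (auto intro: powr_le1)
  have P: "0 \<le> (\<Sum>k<J. ?p k powr (1 + b)) \<and> (\<Sum>k<J. ?p k powr (1 + b)) \<le> real J"
  proof
    show "0 \<le> (\<Sum>k<J. ?p k powr (1 + b))" by (rule sum_nonneg) (use pw b in auto)
    have "(\<Sum>k<J. ?p k powr (1 + b)) \<le> (\<Sum>k<J. 1)" by (rule sum_mono) (use pw b in auto)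
    then show "(\<Sum>k<J. ?p k powr (1 + b)) \<le> real J" by simp
  qed
  define c where "c = (1 + b) / sdB b lam"
  have c0: "c \<ge> 0" using b B by (simp add: c_def)
  have q: "0 \<le> c * ?p j powr sdB b lam \<and> c * ?p j powr sdB b lam \<le> c"
    using pw[OF j B] c0 by (auto intro: mult_left_le mult_nonneg_nonneg)
  have D: "real J * (sdA b lam / sdB b lam) \<ge> 0" using A B by simp
  have "\<bar>(\<Sum>k<J. ?p k powr (1 + b)) - c * ?p j powr sdB b lam + real J * (sdA b lam / sdB b lam)\<bar>
      \<le> real J + c + real J * (sdA b lam / sdB b lam)"
    using P q D by linarith
  then have "(1 / sdA b lam) * \<bar>(\<Sum>k<J. ?p k powr (1 + b)) - c * ?p j powr sdB b lam + real J * (sdA b lam / sdB b lam)\<bar>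
      \<le> (1 / sdA b lam) * (real J + c + real J * (sdA b lam / sdB b lam))"
    using A by (intro mult_left_mono) auto
  then show ?thesis
    unfolding sd_onehot[OF j] c_def using A by (simp add: abs_mult)
qed



theorem theorem3:
  fixes G :: "'x measure" and pstar :: "'x \<Rightarrow> nat \<Rightarrow> real"
    and f :: "'t \<Rightarrow> 'x \<Rightarrow> nat \<Rightarrow> real" and \<Theta> :: "'t set"
    and \<beta> lam \<eta> :: real and J :: nat and \<theta>s \<theta>n :: 't
  assumes T: "in_T \<beta> lam"
    and J: "J \<ge> 2"
    and eta: "0 \<le> \<eta>" "\<eta> < 1 - 1 / real J"
    and G: "prob_space G"
    and pstar_simplex: "\<forall>x\<in>space G. in_simplex J (pstar x)"
    and pstar_meas: "\<forall>j<J. (\<lambda>x. pstar x j) \<in> borel_measurable G"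
    and f_meas: "\<forall>\<theta>\<in>\<Theta>. \<forall>j<J. (\<lambda>x. f \<theta> x j) \<in> borel_measurable G"
    and clean_min: "\<theta>s \<in> \<Theta>" "\<forall>\<theta>\<in>\<Theta>. risk \<beta> lam J G pstar f \<theta>s \<le> risk \<beta> lam J G pstar f \<theta>"
    and noisy_min: "\<theta>n \<in> \<Theta>"
      "\<forall>\<theta>\<in>\<Theta>. noisy_risk \<beta> lam J \<eta> G pstar f \<theta>n \<le> noisy_risk \<beta> lam J \<eta> G pstar f \<theta>"
  shows "0 \<le> risk \<beta> lam J G pstar f \<theta>n - risk \<beta> lam J G pstar f \<theta>s
       \<and> risk \<beta> lam J G pstar f \<theta>n - risk \<beta> lam J G pstar f \<theta>s \<le> excess_bound \<beta> lam J \<eta>"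
  proof -
  interpret P: prob_space G by (rule G)
  have J1: "J \<ge> 1" using J by simp
  have b: "0 \<le> \<beta>" "\<beta> \<le> 1" using T unfolding in_T_def by auto
  have A: "sdA \<beta> lam > 0" and B: "sdB \<beta> lam > 0"
  proof -
    have "(0 \<le> \<beta> \<and> \<beta> < 1 \<and> - 1 / (1 - \<beta>) < lam \<and> lam < \<beta> / (1 - \<beta>)) \<or> \<beta> = 1"
      using T unfolding in_T_def .
    then have "sdA \<beta> lam > 0 \<and> sdB \<beta> lam > 0"
    proof
      assume h: "0 \<le> \<beta> \<and> \<beta> < 1 \<and> - 1 / (1 - \<beta>) < lam \<and> lam < \<beta> / (1 - \<beta>)"
      then have pos: "1 - \<beta> > 0" by simp
      have "(- 1 / (1 - \<beta>)) * (1 - \<beta>) < lam * (1 - \<beta>)"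
        using h pos by (intro mult_strict_right_mono) auto
      then have "- 1 < lam * (1 - \<beta>)" using pos by simp
      moreover have "lam * (1 - \<beta>) < (\<beta> / (1 - \<beta>)) * (1 - \<beta>)"
        using h pos by (intro mult_strict_right_mono) auto
      then have "lam * (1 - \<beta>) < \<beta>" using pos by simp
      ultimately show ?thesis unfolding sdA_def sdB_def by simp
    qed (simp add: sdA_def sdB_def)
    then show "sdA \<beta> lam > 0" "sdB \<beta> lam > 0" by auto
  qed
  define L where "L = (\<lambda>\<theta> x j. sd_loss \<beta> lam J (onehot j) (softmax J (f \<theta> x)))"
  define K where "K = (1 / sdA \<beta> lam) * (real J + (1 + \<beta>) / sdB \<beta> lam + real J * (sdA \<beta> lam / sdB \<beta> lam))"
  have Lb: "\<bar>L \<theta> x j\<bar> \<le> K" if "j < J" for \<theta> x j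
    unfolding L_def K_def by (rule sd_bound) (use J1 that b A B in auto)
  have Lm: "(\<lambda>x. L \<theta> x j) \<in> borel_measurable G" if th: "\<theta> \<in> \<Theta>" and j: "j < J" for \<theta> j
  proof -
    have fm: "(\<lambda>x. f \<theta> x k) \<in> borel_measurable G" if "k < J" for k
      using f_meas th that by auto
    have sm: "(\<lambda>x. softmax J (f \<theta> x) k) \<in> borel_measurable G" if "k < J" for k
      unfolding softmax_def using fm that by measurable
    show ?thesis
      unfolding L_def sd_onehot[OF j] using sm j by measurable
  qed
  have pb: "\<bar>pstar x j\<bar> \<le> 1" if "x \<in> space G" "j < J" for x j
  proof -
    have s: "in_simplex J (pstar x)" using pstar_simplex that by auto
    then have "0 \<le> pstar x j" using that unfolding in_simplex_def by auto
    moreover have "pstar x j \<le> (\<Sum>j<J. pstar x j)"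
      by (rule member_le_sum) (use s that in \<open>auto simp: in_simplex_def\<close>)
    ultimately show ?thesis using s unfolding in_simplex_def by auto
  qed
  have intS: "integrable G (\<lambda>x. \<Sum>j<J. L \<theta> x j)" if "\<theta> \<in> \<Theta>" for \<theta>
  proof (rule Bochner_Integration.integrable_sum[where f="\<lambda>j x. L \<theta> x j", simplified])
    fix j assume "j \<in> {..<J}"
    then show "integrable G (\<lambda>x. L \<theta> x j)"
      by (intro P.integrable_const_bound[where B=K]) (use Lb Lm that in auto)
  qed
  have intC: "integrable G (\<lambda>x. \<Sum>j<J. pstar x j * L \<theta> x j)" if "\<theta> \<in> \<Theta>" for \<theta>
  proof (rule Bochner_Integration.integrable_sum)
    fix j assume j: "j \<in> {..<J}"
    have "AE x in G. norm (pstar x j * L \<theta> x j) \<le> 1 * K"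
    proof (rule AE_I2)
      fix x assume "x \<in> space G"
      then show "norm (pstar x j * L \<theta> x j) \<le> 1 * K"
      proof -
        have "\<bar>pstar x j\<bar> * \<bar>L \<theta> x j\<bar> \<le> 1 * K"
          using pb[OF \<open>x \<in> space G\<close>] Lb j by (intro mult_mono) auto
        then show ?thesis by (simp add: abs_mult)
      qed
    qed
    then show "integrable G (\<lambda>x. pstar x j * L \<theta> x j)"
      by (intro P.integrable_const_bound[where B="1 * K"]) (use Lm that j pstar_meas in auto)
  qed
  define a where "a = \<eta> / (real J - 1)"
  define c where "c = 1 - \<eta> * real J / (real J - 1)"
  have J1r: "real J - 1 > 0" using J by simp
  have c0: "c > 0"
  proof -
    have "\<eta> * real J < real J - 1"
      using eta(2) J by (simp add: field_simps)
    then show ?thesis unfolding c_def using J1r by (simp add: field_simps)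
  qed
  have a0: "a \<ge> 0" unfolding a_def using eta J1r by simp
  define S where "S = (\<lambda>\<theta>. \<integral>x. (\<Sum>j<J. L \<theta> x j) \<partial>G)"
  have R: "risk \<beta> lam J G pstar f \<theta> = (\<integral>x. (\<Sum>j<J. pstar x j * L \<theta> x j) \<partial>G)" for \<theta>
    unfolding risk_def exp_loss_def L_def ..
  have NR: "noisy_risk \<beta> lam J \<eta> G pstar f \<theta> = c * risk \<beta> lam J G pstar f \<theta> + a * S \<theta>"
    if th: "\<theta> \<in> \<Theta>" for \<theta>
  proof -
    have np: "noisy_prob J \<eta> q j = c * q j + a" for q j
    proof -
      have e: "\<eta> * real J / (real J - 1) = \<eta> + \<eta> / (real J - 1)"
        using J1r by (simp add: field_simps)
      show ?thesis unfolding noisy_prob_def a_def c_def e by (simp add: algebra_simps add_divide_distrib[symmetric])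
    qed
    have "noisy_risk \<beta> lam J \<eta> G pstar f \<theta>
        = (\<integral>x. (c * (\<Sum>j<J. pstar x j * L \<theta> x j) + a * (\<Sum>j<J. L \<theta> x j)) \<partial>G)"
      unfolding noisy_risk_def exp_loss_def L_def np
      by (simp add: sum_distrib_left sum.distrib algebra_simps)
    also have "\<dots> = c * (\<integral>x. (\<Sum>j<J. pstar x j * L \<theta> x j) \<partial>G) + a * S \<theta>"
      unfolding S_def using intC[OF th] intS[OF th] by simp
    finally show ?thesis unfolding R .
  qed
  have ineq: "c * risk \<beta> lam J G pstar f \<theta>n + a * S \<theta>n \<le> c * risk \<beta> lam J G pstar f \<theta>s + a * S \<theta>s"
    using noisy_min(2) clean_min(1) NR[OF clean_min(1)] NR[OF noisy_min(1)] by auto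
  define W where "W = (1 / sdA \<beta> lam) * (real J - real J powr (1 - \<beta>)
      + (1 + \<beta>) / sdB \<beta> lam * \<bar>1 - real J powr (1 - sdB \<beta> lam)\<bar>)"
  have SW: "S \<theta>s - S \<theta>n \<le> W"
  proof -
    have "S \<theta>s - S \<theta>n = (\<integral>x. ((\<Sum>j<J. L \<theta>s x j) - (\<Sum>j<J. L \<theta>n x j)) \<partial>G)"
      unfolding S_def using intS clean_min(1) noisy_min(1) by simp
    also have "\<dots> \<le> W"
    proof (rule P.integral_le_const)
      show "integrable G (\<lambda>x. (\<Sum>j<J. L \<theta>s x j) - (\<Sum>j<J. L \<theta>n x j))"
        using intS clean_min(1) noisy_min(1) by auto
      show "AE x in G. (\<Sum>j<J. L \<theta>s x j) - (\<Sum>j<J. L \<theta>n x j) \<le> W"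
        unfolding L_def W_def
        by (intro AE_I2 pointwise_bound) (use J1 b A B softmax_pos softmax_sum in auto)
    qed
    finally show ?thesis .
  qed
  have d: "c * (risk \<beta> lam J G pstar f \<theta>n - risk \<beta> lam J G pstar f \<theta>s) \<le> a * W"
  proof -
    have "c * (risk \<beta> lam J G pstar f \<theta>n - risk \<beta> lam J G pstar f \<theta>s) \<le> a * (S \<theta>s - S \<theta>n)"
      using ineq by (simp add: algebra_simps)
    also have "\<dots> \<le> a * W" using SW a0 by (rule mult_left_mono)
    finally show ?thesis .
  qed
  have ac: "a / c = \<eta> / (real J - 1 - real J * \<eta>)"
  proof -
    have ce: "c = (real J - 1 - real J * \<eta>) / (real J - 1)"
      unfolding c_def using J1r by (simp add: field_simps)
    have ne: "real J - 1 - real J * \<eta> \<noteq> 0" using c0 ce J1r by auto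
    have hh: "(x / d) / (y / d) = x / y" if "d \<noteq> 0" for x y d :: real
      using that by (simp add: divide_divide_times_eq)
    show ?thesis unfolding a_def ce by (rule hh) (use J1r in simp)
  qed
  have "risk \<beta> lam J G pstar f \<theta>n - risk \<beta> lam J G pstar f \<theta>s \<le> a / c * W"
    using d c0 by (simp add: field_simps)
  also have "\<dots> = excess_bound \<beta> lam J \<eta>"
    unfolding ac excess_bound_def W_def by simp
  finally have up: "risk \<beta> lam J G pstar f \<theta>n - risk \<beta> lam J G pstar f \<theta>s \<le> excess_bound \<beta> lam J \<eta>" .
  moreover have "0 \<le> risk \<beta> lam J G pstar f \<theta>n - risk \<beta> lam J G pstar f \<theta>s"
    using clean_min noisy_min(1) by auto
  ultimately show ?thesis by simp
qed

end
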